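(* Let $\overline X$ be a compact Hausdorff space, and let $\partial_L,\partial_R\subset\overline X$ be disjoint closed subspaces. Write $\partial\overline X:=\partial_L\cup\partial_R$ and $X:=\overline X\setminus\partial\overline X$. Then the two pointed extensions of $X$ \[ X_\ast:=\ast\amalg_{\partial_L}(\overline X\setminus\partial_R)\qquad\text{and}\qquad \ast\amalg_{\partial_R}(\overline X\setminus\partial_L) \] are both well-pointed, and each is the negation of the other.
   Context: A pointed extension of a locally compact Hausdorff space $X$ is a compactly generated Hausdorff topology on $\ast\amalg X$ extending that of $X$; they form a poset with $X_\ast\le X'_\ast$ iff the identity map is continuous, with initial object $X_+$ and final object $X^+$ (one-point compactification). The negation $X_\ast^\neg$ is the final pointed extension $X'_\ast$ for which the natural map $X_+\to X_\ast\times_{X^+}X'_\ast$ is a homeomorphism. $X_\ast$ is well-pointed if the canonical relation $X_\ast\to X_\ast^{\neg\neg}$ is a homeomorphism. Here $\ast\amalg_{\partial_L}(\overline X\setminus\partial_R)$ denotes the quotient collapsing $\partial_L$ to the point $\ast$. *)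

theory Defs
  imports "HOL-Analysis.Analysis"
begin

text \<open>The pointed set  * \<amalg> X  is modelled on the type 'a option: None is the
  base point *, and Some x is the point x of X.\<close>

definition pt_carrier :: "'a topology \<Rightarrow> 'a option set" where
  "pt_carrier X = insert None (Some ` topspace X)"

definition pointed_extension :: "'a topology \<Rightarrow> 'a option topology \<Rightarrow> bool" where
  "pointed_extension X T \<longleftrightarrow>
     topspace T = pt_carrier X \<and> Hausdorff_space T \<and> k_space T \<and>
     homeomorphic_map X (subtopology T (Some ` topspace X)) Some"

definition pe_le :: "'a option topology \<Rightarrow> 'a option topology \<Rightarrow> bool" where
  "pe_le T T' \<longleftrightarrow> continuous_map T T' id"

text \<open>The initial pointed extension X_+ (base point isolated).\<close>

definition pe_plus :: "'a topology \<Rightarrow> 'a option topology" where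
  "pe_plus X = topology (\<lambda>U. U \<subseteq> pt_carrier X \<and> openin X {x. Some x \<in> U})"

text \<open>The fibre product X_* \<times>_{X^+} X'_* in the category of compactly generated
  Hausdorff spaces: k-ification of the subspace {(p,p)} of the product.\<close>

definition pe_fibre_product :: "'a topology \<Rightarrow> 'a option topology \<Rightarrow> 'a option topology
    \<Rightarrow> ('a option \<times> 'a option) topology" where
  "pe_fibre_product X T T' =
     kification (subtopology (prod_topology T T') {(p, p) | p. p \<in> pt_carrier X})"

definition pe_disjoint :: "'a topology \<Rightarrow> 'a option topology \<Rightarrow> 'a option topology \<Rightarrow> bool" where
  "pe_disjoint X T T' \<longleftrightarrow>
     homeomorphic_map (pe_plus X) (pe_fibre_product X T T') (\<lambda>p. (p, p))"

definition is_negation :: "'a topology \<Rightarrow> 'a option topology \<Rightarrow> 'a option topology \<Rightarrow> bool" where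
  "is_negation X T N \<longleftrightarrow>
     pointed_extension X N \<and> pe_disjoint X T N \<and>
     (\<forall>N'. pointed_extension X N' \<and> pe_disjoint X T N' \<longrightarrow> pe_le N' N)"

definition pe_neg :: "'a topology \<Rightarrow> 'a option topology \<Rightarrow> 'a option topology" where
  "pe_neg X T = (THE N. is_negation X T N)"

definition well_pointed :: "'a topology \<Rightarrow> 'a option topology \<Rightarrow> bool" where
  "well_pointed X T \<longleftrightarrow>
     pointed_extension X T \<and> (\<exists>N. is_negation X T N) \<and>
     (\<exists>NN. is_negation X (pe_neg X T) NN) \<and>
     homeomorphic_map T (pe_neg X (pe_neg X T)) id"

text \<open>The quotient  * \<amalg>_L (Xbar \ R): collapse L to the base point.\<close>

definition collapse_quot :: "'a topology \<Rightarrow> 'a set \<Rightarrow> 'a set \<Rightarrow> 'a option topology" where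
  "collapse_quot Xb L R = topology (\<lambda>U.
     U \<subseteq> insert None (Some ` (topspace Xb - R - L)) \<and>
     openin (subtopology Xb (topspace Xb - R))
       {x \<in> topspace Xb - R. (if x \<in> L then None else Some x) \<in> U})"

end

theory Submission imports Defs begin

definition qm :: "'a set \<Rightarrow> 'a \<Rightarrow> 'a option" where
  "qm L x = (if x \<in> L then None else Some x)"

lemma istop_cq: "istopology (\<lambda>U. U \<subseteq> insert None (Some ` (topspace Xb - R - L)) \<and>
     openin (subtopology Xb (topspace Xb - R))
       {x \<in> topspace Xb - R. (if x \<in> L then None else Some x) \<in> U})"
  unfolding istopology_def
proof (rule conjI; intro allI impI)
  fix S T :: "'a option set"
  let ?f = "\<lambda>x. (if x \<in> L then None else Some x)"
  assume a: "S \<subseteq> insert None (Some ` (topspace Xb - R - L)) \<and>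
     openin (subtopology Xb (topspace Xb - R)) {x \<in> topspace Xb - R. ?f x \<in> S}"
    "T \<subseteq> insert None (Some ` (topspace Xb - R - L)) \<and>
     openin (subtopology Xb (topspace Xb - R)) {x \<in> topspace Xb - R. ?f x \<in> T}"
  have "{x \<in> topspace Xb - R. ?f x \<in> S \<inter> T} = {x \<in> topspace Xb - R. ?f x \<in> S} \<inter> {x \<in> topspace Xb - R. ?f x \<in> T}"
    by blast
  note eq = this
  show "S \<inter> T \<subseteq> insert None (Some ` (topspace Xb - R - L)) \<and>
     openin (subtopology Xb (topspace Xb - R)) {x \<in> topspace Xb - R. ?f x \<in> S \<inter> T}"
  proof
    show "S \<inter> T \<subseteq> insert None (Some ` (topspace Xb - R - L))" using a by blast
    show "openin (subtopology Xb (topspace Xb - R)) {x \<in> topspace Xb - R. ?f x \<in> S \<inter> T}"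
      unfolding eq using a by (blast intro: openin_Int)
  qed
next
  fix K :: "'a option set set"
  let ?f = "\<lambda>x. (if x \<in> L then None else Some x)"
  assume a: "\<forall>S\<in>K. S \<subseteq> insert None (Some ` (topspace Xb - R - L)) \<and>
     openin (subtopology Xb (topspace Xb - R)) {x \<in> topspace Xb - R. ?f x \<in> S}"
  have "{x \<in> topspace Xb - R. ?f x \<in> \<Union>K} = \<Union>((\<lambda>S. {x \<in> topspace Xb - R. ?f x \<in> S}) ` K)"
    by blast
  note eq = this
  show "\<Union>K \<subseteq> insert None (Some ` (topspace Xb - R - L)) \<and>
     openin (subtopology Xb (topspace Xb - R)) {x \<in> topspace Xb - R. ?f x \<in> \<Union>K}"
  proof
    show "\<Union>K \<subseteq> insert None (Some ` (topspace Xb - R - L))" using a by blast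
    show "openin (subtopology Xb (topspace Xb - R)) {x \<in> topspace Xb - R. ?f x \<in> \<Union>K}"
      unfolding eq using a by (blast intro: openin_Union)
  qed
qed

lemma openin_cq: "openin (collapse_quot Xb L R) U \<longleftrightarrow>
   U \<subseteq> insert None (Some ` (topspace Xb - R - L)) \<and>
     openin (subtopology Xb (topspace Xb - R))
       {x \<in> topspace Xb - R. qm L x \<in> U}"
  unfolding collapse_quot_def qm_def using istop_cq[of Xb R L] by simp

lemma topspace_cq: "topspace (collapse_quot Xb L R) = insert None (Some ` (topspace Xb - R - L))"
proof -
  have "openin (collapse_quot Xb L R) (insert None (Some ` (topspace Xb - R - L)))"
    unfolding openin_cq
  proof
    have "{x \<in> topspace Xb - R. qm L x \<in> insert None (Some ` (topspace Xb - R - L))} = topspace Xb - R"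
      by (auto simp: qm_def)
    then show "openin (subtopology Xb (topspace Xb - R)) {x \<in> topspace Xb - R. qm L x \<in> insert None (Some ` (topspace Xb - R - L))}"
      by (metis openin_topspace topspace_subtopology_subset Diff_subset)
  qed simp
  then show ?thesis using openin_cq openin_subset
    by (metis openin_topspace subset_antisym)
qed


context
  fixes Xb :: "'a topology" and L R :: "'a set"
  assumes cpt: "compact_space Xb" and hd: "Hausdorff_space Xb"
    and cL: "closedin Xb L" and cR: "closedin Xb R" and dj: "disjnt L R"
begin

lemma oR: "openin Xb (topspace Xb - R)"
  using cR by blast

lemma oX0: "openin Xb (topspace Xb - (L \<union> R))"
  using cR cL by (simp add: closedin_Un openin_diff)

lemma subR_open: "openin (subtopology Xb (topspace Xb - R)) S \<longleftrightarrow> openin Xb S \<and> S \<subseteq> topspace Xb - R"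
  using openin_open_subtopology[OF oR] .

lemma cq_open_nb:
  assumes "openin Xb A" "L \<subseteq> A"
  shows "openin (collapse_quot Xb L R) (insert None (Some ` (A - R - L)))"
  unfolding openin_cq
proof
  have A: "A \<subseteq> topspace Xb" using assms openin_subset by blast
  then show "insert None (Some ` (A - R - L)) \<subseteq> insert None (Some ` (topspace Xb - R - L))" by blast
  have "{x \<in> topspace Xb - R. qm L x \<in> insert None (Some ` (A - R - L))} = A - R"
    using A assms(2) by (auto simp: qm_def)
  moreover have "openin Xb (A - R)" using assms cR by (simp add: openin_diff)
  ultimately show "openin (subtopology Xb (topspace Xb - R)) {x \<in> topspace Xb - R. qm L x \<in> insert None (Some ` (A - R - L))}"
    using A subR_open by auto
qed

lemma cq_open_Some:
  assumes "U \<subseteq> topspace Xb - (L \<union> R)"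
  shows "openin (collapse_quot Xb L R) (Some ` U) \<longleftrightarrow> openin Xb U"
proof -
  have e: "{x \<in> topspace Xb - R. qm L x \<in> Some ` U} = U"
    using assms by (auto simp: qm_def)
  show ?thesis unfolding openin_cq e using assms subR_open by auto
qed

lemma cont_qm: "continuous_map (subtopology Xb (topspace Xb - R)) (collapse_quot Xb L R) (qm L)"
  unfolding continuous_map_def
proof (intro conjI allI impI)
  show "qm L \<in> topspace (subtopology Xb (topspace Xb - R)) \<rightarrow> topspace (collapse_quot Xb L R)"
    by (auto simp: topspace_cq qm_def)
  fix U assume "openin (collapse_quot Xb L R) U"
  then show "openin (subtopology Xb (topspace Xb - R)) {x \<in> topspace (subtopology Xb (topspace Xb - R)). qm L x \<in> U}"
    unfolding openin_cq by (simp add: topspace_subtopology_subset)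
qed

lemma cont_Some: "continuous_map (subtopology Xb (topspace Xb - (L \<union> R))) (collapse_quot Xb L R) Some"
proof -
  have "continuous_map (subtopology (subtopology Xb (topspace Xb - R)) (topspace Xb - (L \<union> R))) (collapse_quot Xb L R) (qm L)"
    using cont_qm by (rule continuous_map_from_subtopology)
  moreover have "subtopology (subtopology Xb (topspace Xb - R)) (topspace Xb - (L \<union> R)) = subtopology Xb (topspace Xb - (L \<union> R))"
    by (simp add: subtopology_subtopology Int_absorb1 Diff_mono)
  ultimately have "continuous_map (subtopology Xb (topspace Xb - (L \<union> R))) (collapse_quot Xb L R) (qm L)"
    by simp
  then show ?thesis
    by (rule continuous_map_eq) (auto simp: qm_def)
qed

lemma normalXb: "normal_space Xb"
  using cpt hd compact_Hausdorff_or_regular_imp_normal_space by blast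

lemma sep_None:
  assumes b: "b \<in> topspace Xb - (L \<union> R)"
  shows "\<exists>U V. openin (collapse_quot Xb L R) U \<and> openin (collapse_quot Xb L R) V \<and> None \<in> U \<and> Some b \<in> V \<and> disjnt U V"
proof -
  have c1: "closedin Xb {b}" using b hd closedin_Hausdorff_singleton by (metis DiffD1)
  have c2: "disjnt L {b}" using b by auto
  have "\<exists>A B. openin Xb A \<and> openin Xb B \<and> L \<subseteq> A \<and> {b} \<subseteq> B \<and> disjnt A B"
    using normalXb cL c1 c2 unfolding normal_space_def by blast
  then obtain A B where AB: "openin Xb A" "openin Xb B" "L \<subseteq> A" "{b} \<subseteq> B" "disjnt A B"
    by blast
  define V where "V = Some ` (B \<inter> (topspace Xb - (L \<union> R)))"
  define U where "U = insert None (Some ` (A - R - L))"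
  have "openin Xb (B \<inter> (topspace Xb - (L \<union> R)))" using AB(2) oX0 by (rule openin_Int)
  then have oV: "openin (collapse_quot Xb L R) V"
    unfolding V_def by (subst cq_open_Some) auto
  have oU: "openin (collapse_quot Xb L R) U"
    unfolding U_def using AB(1,3) by (rule cq_open_nb)
  have d: "disjnt U V"
    using AB(5) unfolding U_def V_def disjnt_def by blast
  have "None \<in> U" "Some b \<in> V" using b AB(4) unfolding U_def V_def by auto
  then show ?thesis using oU oV d by blast
qed

lemma sep_SS:
  assumes a: "a \<in> topspace Xb - (L \<union> R)" and b: "b \<in> topspace Xb - (L \<union> R)" and ab: "a \<noteq> b"
  shows "\<exists>U V. openin (collapse_quot Xb L R) U \<and> openin (collapse_quot Xb L R) V \<and> Some a \<in> U \<and> Some b \<in> V \<and> disjnt U V"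
proof -
  have "\<exists>A B. openin Xb A \<and> openin Xb B \<and> a \<in> A \<and> b \<in> B \<and> disjnt A B"
    using hd a b ab unfolding Hausdorff_space_def by blast
  then obtain A B where AB: "openin Xb A" "openin Xb B" "a \<in> A" "b \<in> B" "disjnt A B"
    by blast
  define V where "V = Some ` (B \<inter> (topspace Xb - (L \<union> R)))"
  define U where "U = Some ` (A \<inter> (topspace Xb - (L \<union> R)))"
  have "openin Xb (B \<inter> (topspace Xb - (L \<union> R)))" using AB(2) oX0 by (rule openin_Int)
  then have oV: "openin (collapse_quot Xb L R) V"
    unfolding V_def by (subst cq_open_Some) auto
  have "openin Xb (A \<inter> (topspace Xb - (L \<union> R)))" using AB(1) oX0 by (rule openin_Int)
  then have oU: "openin (collapse_quot Xb L R) U"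
    unfolding U_def by (subst cq_open_Some) auto
  have d: "disjnt U V"
    using AB(5) unfolding U_def V_def disjnt_def by blast
  have "Some a \<in> U" "Some b \<in> V" using a b AB(3,4) unfolding U_def V_def by auto
  then show ?thesis using oU oV d by blast
qed

lemma Hausdorff_cq: "Hausdorff_space (collapse_quot Xb L R)"
  unfolding Hausdorff_space_def
proof (intro allI impI)
  fix x y assume xy: "x \<in> topspace (collapse_quot Xb L R) \<and> y \<in> topspace (collapse_quot Xb L R) \<and> x \<noteq> y"
  show "\<exists>U V. openin (collapse_quot Xb L R) U \<and> openin (collapse_quot Xb L R) V \<and> x \<in> U \<and> y \<in> V \<and> disjnt U V"
  proof (cases x)
    case None
    then obtain b where yb: "y = Some b" and b: "b \<in> topspace Xb - (L \<union> R)" using xy by (auto simp: topspace_cq)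
    show ?thesis using sep_None[OF b] None yb by blast
  next
    case (Some a)
    have a: "a \<in> topspace Xb - (L \<union> R)" using xy Some by (auto simp: topspace_cq)
    show ?thesis
    proof (cases y)
      case None
      obtain U V where "openin (collapse_quot Xb L R) U" "openin (collapse_quot Xb L R) V" "None \<in> U" "Some a \<in> V" "disjnt U V"
        using sep_None[OF a] by blast
      then show ?thesis using None Some disjnt_sym by blast
    next
      case (Some b)
      have b: "b \<in> topspace Xb - (L \<union> R)" using xy Some by (auto simp: topspace_cq)
      have "a \<noteq> b" using xy Some \<open>x = Some a\<close> by auto
      then show ?thesis using sep_SS[OF a b] Some \<open>x = Some a\<close> by blast
    qed
  qed
qed

lemma tsXX: "topspace (subtopology Xb (topspace Xb - (L \<union> R))) = topspace Xb - (L \<union> R)"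
  by (simp add: topspace_subtopology Int_absorb1 Diff_subset)

lemma lc_X0: "locally_compact_space (subtopology Xb (topspace Xb - (L \<union> R)))"
  using locally_compact_space_open_subset[of Xb] hd compact_imp_locally_compact_space[OF cpt] oX0 by blast

lemma lc_cq: "locally_compact_space (collapse_quot Xb L R)"
  unfolding locally_compact_space_def
proof
  fix p assume p: "p \<in> topspace (collapse_quot Xb L R)"
  show "\<exists>U K. openin (collapse_quot Xb L R) U \<and> compactin (collapse_quot Xb L R) K \<and> p \<in> U \<and> U \<subseteq> K"
  proof (cases p)
    case None
    have "\<exists>A B. openin Xb A \<and> openin Xb B \<and> L \<subseteq> A \<and> R \<subseteq> B \<and> disjnt A B"
      using normalXb cL cR dj unfolding normal_space_def by blast
    then obtain A B where AB: "openin Xb A" "openin Xb B" "L \<subseteq> A" "R \<subseteq> B" "disjnt A B"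
      by blast
    define U where "U = insert None (Some ` (A - R - L))"
    define K where "K = insert None (qm L ` (topspace Xb - B))"
    have oU: "openin (collapse_quot Xb L R) U"
      unfolding U_def using AB(1,3) by (rule cq_open_nb)
    have "closedin Xb (topspace Xb - B)" using AB(2) by blast
    then have "compactin Xb (topspace Xb - B)" using cpt closedin_compact_space by blast
    moreover have "topspace Xb - B \<subseteq> topspace Xb - R" using AB(4) by blast
    ultimately have "compactin (subtopology Xb (topspace Xb - R)) (topspace Xb - B)"
      by (simp add: compactin_subtopology)
    then have c1: "compactin (collapse_quot Xb L R) (qm L ` (topspace Xb - B))"
      using cont_qm by (rule image_compactin)
    have "None \<in> topspace (collapse_quot Xb L R)" by (simp add: topspace_cq)
    then have "compactin (collapse_quot Xb L R) {None}" by simp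
    then have cK: "compactin (collapse_quot Xb L R) K"
      unfolding K_def using c1 by (metis compactin_Un insert_is_Un)
    have "U \<subseteq> K"
    proof
      fix y assume "y \<in> U"
      then show "y \<in> K"
      proof (cases "y = None")
        case False
        then obtain x where "y = Some x" "x \<in> A" "x \<notin> R" "x \<notin> L" "x \<in> topspace Xb" using \<open>y \<in> U\<close> AB(1) openin_subset
          unfolding U_def by blast
        moreover have "x \<notin> B" using AB(5) \<open>x \<in> A\<close> by (auto simp: disjnt_def)
        ultimately show ?thesis unfolding K_def qm_def by (auto intro!: image_eqI[of _ _ x])
      qed (simp add: K_def)
    qed
    then show ?thesis using oU cK None U_def by blast
  next
    case (Some b)
    then have b: "b \<in> topspace (subtopology Xb (topspace Xb - (L \<union> R)))"
      using p by (auto simp: topspace_cq tsXX)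
    obtain U0 K0 where UK: "openin (subtopology Xb (topspace Xb - (L \<union> R))) U0"
        "compactin (subtopology Xb (topspace Xb - (L \<union> R))) K0" "b \<in> U0" "U0 \<subseteq> K0"
      using lc_X0 b unfolding locally_compact_space_def by blast
    have "openin Xb U0" "U0 \<subseteq> topspace Xb - (L \<union> R)"
      using UK(1) openin_trans_full[OF _ oX0] openin_subset[OF UK(1)] tsXX by auto
    then have oU: "openin (collapse_quot Xb L R) (Some ` U0)" by (simp add: cq_open_Some)
    have cK: "compactin (collapse_quot Xb L R) (Some ` K0)" using UK(2) cont_Some by (rule image_compactin)
    show ?thesis using oU cK UK(3,4) Some by blast
  qed
qed

lemma k_cq: "k_space (collapse_quot Xb L R)"
  using lc_cq by (rule locally_compact_imp_k_space)

lemma hm_cq: "homeomorphic_map (subtopology Xb (topspace Xb - (L \<union> R)))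
   (subtopology (collapse_quot Xb L R) (Some ` topspace (subtopology Xb (topspace Xb - (L \<union> R))))) Some"
  unfolding homeomorphic_map_maps
proof (intro exI[of _ the])
  let ?X = "subtopology Xb (topspace Xb - (L \<union> R))"
  let ?T = "collapse_quot Xb L R"
  let ?S = "Some ` (topspace Xb - (L \<union> R))"
  have c1: "continuous_map ?X (subtopology ?T ?S) Some"
    using cont_Some by (auto simp: continuous_map_in_subtopology tsXX)
  have c2: "continuous_map (subtopology ?T ?S) ?X the"
    unfolding continuous_map_def
  proof (intro conjI allI impI)
    show "the \<in> topspace (subtopology ?T ?S) \<rightarrow> topspace ?X" by (auto simp: tsXX)
    fix U assume U: "openin ?X U"
    have "openin Xb U" "U \<subseteq> topspace Xb - (L \<union> R)"
      using U openin_trans_full[OF _ oX0] openin_subset[OF U] tsXX by auto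
    then have o: "openin ?T (Some ` U)" by (simp add: cq_open_Some)
    have "{x \<in> topspace (subtopology ?T ?S). the x \<in> U} = ?S \<inter> Some ` U"
      using \<open>U \<subseteq> _\<close> by (auto simp: topspace_cq)
    then show "openin (subtopology ?T ?S) {x \<in> topspace (subtopology ?T ?S). the x \<in> U}"
      using openin_subtopology_Int2[OF o] by simp
  qed
  show "homeomorphic_maps ?X (subtopology ?T (Some ` topspace ?X)) Some the"
    unfolding homeomorphic_maps_def tsXX using c1 c2 by (auto simp: tsXX)
qed

lemma pe_cq: "pointed_extension (subtopology Xb (topspace Xb - (L \<union> R))) (collapse_quot Xb L R)"
  unfolding pointed_extension_def
  using Hausdorff_cq k_cq hm_cq by (auto simp: pt_carrier_def tsXX topspace_cq)

end

lemma istop_pe_plus: "istopology (\<lambda>U. U \<subseteq> pt_carrier X \<and> openin X {x. Some x \<in> U})"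
  unfolding istopology_def
proof (rule conjI; intro allI impI)
  fix S T :: "'a option set"
  assume a: "S \<subseteq> pt_carrier X \<and> openin X {x. Some x \<in> S}" "T \<subseteq> pt_carrier X \<and> openin X {x. Some x \<in> T}"
  have eq: "{x. Some x \<in> S \<inter> T} = {x. Some x \<in> S} \<inter> {x. Some x \<in> T}" by blast
  show "S \<inter> T \<subseteq> pt_carrier X \<and> openin X {x. Some x \<in> S \<inter> T}"
    unfolding eq using a by (blast intro: openin_Int)
next
  fix K :: "'a option set set"
  assume a: "\<forall>S\<in>K. S \<subseteq> pt_carrier X \<and> openin X {x. Some x \<in> S}"
  have eq: "{x. Some x \<in> \<Union>K} = \<Union>((\<lambda>S. {x. Some x \<in> S}) ` K)" by blast
  show "\<Union>K \<subseteq> pt_carrier X \<and> openin X {x. Some x \<in> \<Union>K}"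
    unfolding eq using a by (blast intro: openin_Union)
qed

lemma openin_pe_plus: "openin (pe_plus X) U \<longleftrightarrow> U \<subseteq> pt_carrier X \<and> openin X {x. Some x \<in> U}"
  unfolding pe_plus_def using istop_pe_plus[of X] by simp

lemma topspace_pe_plus: "topspace (pe_plus X) = pt_carrier X"
proof -
  have "{x. Some x \<in> pt_carrier X} = topspace X" by (auto simp: pt_carrier_def)
  then have "openin (pe_plus X) (pt_carrier X)" by (simp add: openin_pe_plus)
  then show ?thesis using openin_pe_plus openin_subset
    by (metis openin_topspace subset_antisym)
qed

lemma pe_None_open:
  assumes "pointed_extension X (pe_plus X)" shows "openin (pe_plus X) {None}"
  by (simp add: openin_pe_plus pt_carrier_def)

lemma pe_open_X:
  assumes pe: "pointed_extension X T" shows "openin T (Some ` topspace X)"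
proof -
  have ts: "topspace T = insert None (Some ` topspace X)" using pe by (simp add: pointed_extension_def pt_carrier_def)
  have "Hausdorff_space T" using pe by (simp add: pointed_extension_def)
  moreover have "None \<in> topspace T" using ts by simp
  ultimately have "closedin T {None}" by (rule closedin_Hausdorff_singleton)
  then have "openin T (topspace T - {None})" by blast
  moreover have "topspace T - {None} = Some ` topspace X" using ts by auto
  ultimately show ?thesis by simp
qed

lemma pe_open_Some:
  assumes pe: "pointed_extension X T" and U: "openin X U" shows "openin T (Some ` U)"
proof -
  have hm: "homeomorphic_map X (subtopology T (Some ` topspace X)) Some"
    using pe by (simp add: pointed_extension_def)
  have "openin (subtopology T (Some ` topspace X)) (Some ` U)"
    using homeomorphic_map_openness[OF hm openin_subset[OF U]] U by simp
  then show ?thesis using openin_trans_full pe_open_X[OF pe] by blast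
qed

lemma pe_cont_Some:
  assumes pe: "pointed_extension X T" shows "continuous_map X T Some"
proof -
  have hm: "homeomorphic_map X (subtopology T (Some ` topspace X)) Some"
    using pe by (simp add: pointed_extension_def)
  then show ?thesis using homeomorphic_imp_continuous_map continuous_map_in_subtopology by blast
qed

lemma pe_compact_Some:
  assumes pe: "pointed_extension X T" and K: "compactin X K" shows "compactin T (Some ` K)"
  using image_compactin[OF K pe_cont_Some[OF pe]] .

lemma pe_plus_cont:
  assumes pe: "pointed_extension X T" shows "continuous_map (pe_plus X) T id"
  unfolding continuous_map_def
proof (intro conjI allI impI)
  have ts: "topspace T = pt_carrier X" using pe by (simp add: pointed_extension_def)
  show "id \<in> topspace (pe_plus X) \<rightarrow> topspace T" by (simp add: ts topspace_pe_plus)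
  fix U assume U: "openin T U"
  have Usub: "U \<subseteq> pt_carrier X" using openin_subset[OF U] ts by simp
  have hm: "homeomorphic_map X (subtopology T (Some ` topspace X)) Some"
    using pe by (simp add: pointed_extension_def)
  have "openin (subtopology T (Some ` topspace X)) (Some ` topspace X \<inter> U)"
    using openin_subtopology_Int2[OF U] .
  moreover have "Some ` topspace X \<inter> U = Some ` {x \<in> topspace X. Some x \<in> U}" by auto
  ultimately have "openin X {x \<in> topspace X. Some x \<in> U}"
    using homeomorphic_map_openness[OF hm, of "{x \<in> topspace X. Some x \<in> U}"] by auto
  moreover have "{x \<in> topspace X. Some x \<in> U} = {x. Some x \<in> U}" using Usub by (auto simp: pt_carrier_def)
  ultimately have "openin (pe_plus X) U" using Usub by (simp add: openin_pe_plus)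
  moreover have "{x \<in> topspace (pe_plus X). id x \<in> U} = U" using Usub by (auto simp: topspace_pe_plus)
  ultimately show "openin (pe_plus X) {x \<in> topspace (pe_plus X). id x \<in> U}" by simp
qed

lemma sep1:
  assumes pe1: "pointed_extension X T1" and pe2: "pointed_extension X T2"
    and lc: "locally_compact_space X" and b: "b \<in> topspace X"
  shows "\<exists>U V. openin T1 U \<and> openin T2 V \<and> None \<in> U \<and> Some b \<in> V \<and> U \<inter> V = {}"
proof -
  obtain U0 K0 where UK: "openin X U0" "compactin X K0" "b \<in> U0" "U0 \<subseteq> K0"
    using lc b unfolding locally_compact_space_def by blast
  have oV: "openin T2 (Some ` U0)" using pe_open_Some[OF pe2 UK(1)] .
  have "compactin T1 (Some ` K0)" using pe_compact_Some[OF pe1 UK(2)] .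
  then have "closedin T1 (Some ` K0)" using pe1 compactin_imp_closedin by (auto simp: pointed_extension_def)
  then have oU: "openin T1 (topspace T1 - Some ` K0)" by blast
  have "None \<in> topspace T1 - Some ` K0" using pe1 by (auto simp: pointed_extension_def pt_carrier_def)
  moreover have "(topspace T1 - Some ` K0) \<inter> Some ` U0 = {}" using UK(4) by auto
  ultimately show ?thesis using oU oV UK(3) by blast
qed

lemma sep2:
  assumes pe1: "pointed_extension X T1" and pe2: "pointed_extension X T2"
    and lc: "locally_compact_space X" and hX: "Hausdorff_space X"
    and p: "p \<in> pt_carrier X" and q: "q \<in> pt_carrier X" and pq: "p \<noteq> q"
  shows "\<exists>U V. openin T1 U \<and> openin T2 V \<and> p \<in> U \<and> q \<in> V \<and> U \<inter> V = {}"
proof (cases p)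
  case None
  then obtain b where "q = Some b" "b \<in> topspace X" using q pq by (auto simp: pt_carrier_def)
  then show ?thesis using sep1[OF pe1 pe2 lc] None by blast
next
  case (Some a)
  have a: "a \<in> topspace X" using p Some by (auto simp: pt_carrier_def)
  show ?thesis
  proof (cases q)
    case None
    obtain V U where "openin T2 V" "openin T1 U" "None \<in> V" "Some a \<in> U" "V \<inter> U = {}"
      using sep1[OF pe2 pe1 lc a] by blast
    then show ?thesis using None Some by blast
  next
    case (Some b)
    have b: "b \<in> topspace X" using q Some by (auto simp: pt_carrier_def)
    have "a \<noteq> b" using pq Some \<open>p = Some a\<close> by auto
    then obtain U0 V0 where UV: "openin X U0" "openin X V0" "a \<in> U0" "b \<in> V0" "disjnt U0 V0"
      using hX a b unfolding Hausdorff_space_def by blast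
    have "openin T1 (Some ` U0)" "openin T2 (Some ` V0)" using pe_open_Some pe1 pe2 UV by blast+
    moreover have "Some ` U0 \<inter> Some ` V0 = {}" using UV(5) by (auto simp: disjnt_def)
    ultimately show ?thesis using UV(3,4) Some \<open>p = Some a\<close> by blast
  qed
qed

lemma diag_closed:
  assumes pe1: "pointed_extension X T1" and pe2: "pointed_extension X T2"
    and lc: "locally_compact_space X" and hX: "Hausdorff_space X"
  shows "closedin (prod_topology T1 T2) {(p, p) | p. p \<in> pt_carrier X}"
  unfolding closedin_def
proof
  have ts1: "topspace T1 = pt_carrier X" and ts2: "topspace T2 = pt_carrier X"
    using pe1 pe2 by (simp_all add: pointed_extension_def)
  show "{(p, p) | p. p \<in> pt_carrier X} \<subseteq> topspace (prod_topology T1 T2)" using ts1 ts2 by auto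
  show "openin (prod_topology T1 T2) (topspace (prod_topology T1 T2) - {(p, p) | p. p \<in> pt_carrier X})"
  proof (subst openin_subopen, intro ballI)
    fix z assume z: "z \<in> topspace (prod_topology T1 T2) - {(p, p) | p. p \<in> pt_carrier X}"
    obtain p q where zpq: "z = (p, q)" by (cases z)
    have p: "p \<in> pt_carrier X" and q: "q \<in> pt_carrier X" and pq: "p \<noteq> q" using z zpq ts1 ts2 by auto
    obtain U V where UV: "openin T1 U" "openin T2 V" "p \<in> U" "q \<in> V" "U \<inter> V = {}"
      using sep2[OF pe1 pe2 lc hX p q pq] by blast
    have "openin (prod_topology T1 T2) (U \<times> V)" using UV by (simp add: openin_prod_Times_iff)
    moreover have "U \<times> V \<subseteq> topspace (prod_topology T1 T2) - {(p, p) | p. p \<in> pt_carrier X}"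
      using UV openin_subset[OF UV(1)] openin_subset[OF UV(2)] by auto
    ultimately show "\<exists>T. openin (prod_topology T1 T2) T \<and> z \<in> T \<and> T \<subseteq> topspace (prod_topology T1 T2) - {(p, p) | p. p \<in> pt_carrier X}"
      using UV zpq by blast
  qed
qed

lemma disj_generic:
  assumes pe: "pointed_extension X T" and pe': "pointed_extension X T'"
    and kp: "k_space (pe_plus X)"
    and oU: "openin T U" and oU': "openin T' U'" and nU: "None \<in> U" and nU': "None \<in> U'"
    and UU: "U \<inter> U' = {None}"
  shows "pe_disjoint X T T'"
proof -
  define D where "D = {(p, p) | p. p \<in> pt_carrier X}"
  define S where "S = subtopology (prod_topology T T') D"
  have ts: "topspace T = pt_carrier X" "topspace T' = pt_carrier X"
    using pe pe' by (simp_all add: pointed_extension_def)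
  have tsS: "topspace S = D" unfolding S_def D_def using ts by (auto simp: topspace_subtopology)
  have c1: "continuous_map (pe_plus X) S (\<lambda>p. (p, p))"
  proof -
    have "continuous_map (pe_plus X) (prod_topology T T') (\<lambda>x. (id x, id x))"
      using continuous_map_paired[of "pe_plus X" T T' id id] pe_plus_cont[OF pe] pe_plus_cont[OF pe'] by simp
    then have "continuous_map (pe_plus X) (prod_topology T T') (\<lambda>x. (x, x))" by simp
    moreover have "(\<lambda>x. (x, x)) \<in> topspace (pe_plus X) \<rightarrow> D" by (auto simp: D_def topspace_pe_plus)
    ultimately show ?thesis unfolding S_def by (simp add: continuous_map_in_subtopology)
  qed
  have c2: "continuous_map S (pe_plus X) fst"
    unfolding continuous_map_def
  proof (intro conjI allI impI)
    show "fst \<in> topspace S \<rightarrow> topspace (pe_plus X)" by (auto simp: tsS D_def topspace_pe_plus)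
    fix W assume W: "openin (pe_plus X) W"
    define W0 where "W0 = Some ` {x. Some x \<in> W}"
    have "openin X {x. Some x \<in> W}" using W by (simp add: openin_pe_plus)
    then have oW0: "openin T W0" unfolding W0_def by (rule pe_open_Some[OF pe])
    have o1: "openin S (D \<inter> (W0 \<times> topspace T'))"
      unfolding S_def using oW0 by (intro openin_subtopology_Int2) (simp add: openin_prod_Times_iff)
    have o2: "openin S (D \<inter> (U \<times> U'))"
      unfolding S_def using oU oU' by (intro openin_subtopology_Int2) (simp add: openin_prod_Times_iff)
    have Wsub: "W \<subseteq> pt_carrier X" using W by (simp add: openin_pe_plus)
    show "openin S {x \<in> topspace S. fst x \<in> W}"
    proof (cases "None \<in> W")
      case True
      have "{x \<in> topspace S. fst x \<in> W} = (D \<inter> (W0 \<times> topspace T')) \<union> (D \<inter> (U \<times> U'))"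
      proof (rule set_eqI, rule iffI)
        fix z assume z: "z \<in> {x \<in> topspace S. fst x \<in> W}"
        then obtain p where zp: "z = (p, p)" "p \<in> pt_carrier X" "p \<in> W" by (auto simp: tsS D_def)
        show "z \<in> (D \<inter> (W0 \<times> topspace T')) \<union> (D \<inter> (U \<times> U'))"
        proof (cases p)
          case None then show ?thesis using zp nU nU' by (auto simp: D_def)
        next
          case (Some a) then show ?thesis using zp ts by (auto simp: D_def W0_def)
        qed
      next
        fix z assume z: "z \<in> (D \<inter> (W0 \<times> topspace T')) \<union> (D \<inter> (U \<times> U'))"
        then obtain p where zp: "z = (p, p)" "p \<in> pt_carrier X" by (auto simp: D_def)
        have "p \<in> W"
        proof (cases "z \<in> D \<inter> (W0 \<times> topspace T')")
          case True then show ?thesis using zp by (auto simp: W0_def)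
        next
          case False
          then have "p \<in> U \<inter> U'" using z zp by auto
          then show ?thesis using UU True by auto
        qed
        then show "z \<in> {x \<in> topspace S. fst x \<in> W}" using zp by (auto simp: tsS D_def)
      qed
      then show ?thesis using o1 o2 by (simp add: openin_Un)
    next
      case False
      have "{x \<in> topspace S. fst x \<in> W} = D \<inter> (W0 \<times> topspace T')"
      proof (rule set_eqI, rule iffI)
        fix z assume z: "z \<in> {x \<in> topspace S. fst x \<in> W}"
        then obtain p where zp: "z = (p, p)" "p \<in> pt_carrier X" "p \<in> W" by (auto simp: tsS D_def)
        then obtain a where "p = Some a" using False by (cases p) auto
        then show "z \<in> D \<inter> (W0 \<times> topspace T')" using zp ts by (auto simp: D_def W0_def)
      next
        fix z assume z: "z \<in> D \<inter> (W0 \<times> topspace T')"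
        then show "z \<in> {x \<in> topspace S. fst x \<in> W}" by (auto simp: tsS D_def W0_def)
      qed
      then show ?thesis using o1 by simp
    qed
  qed
  have hm: "homeomorphic_map (pe_plus X) S (\<lambda>p. (p, p))"
    unfolding homeomorphic_map_maps homeomorphic_maps_def
    using c1 c2 by (intro exI[of _ fst]) (auto simp: tsS D_def)
  have "k_space S" using homeomorphic_k_space[OF homeomorphic_map_imp_homeomorphic_space[OF hm]] kp by simp
  then have "kification S = S" by (simp add: kification_eq_self)
  then show ?thesis using hm
    unfolding pe_disjoint_def pe_fibre_product_def S_def D_def by simp
qed

lemma pe_unique:
  assumes "is_negation X T N" "is_negation X T N'" shows "N = N'"
proof -
  have pe: "pointed_extension X N" "pointed_extension X N'" using assms by (simp_all add: is_negation_def)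
  have c: "continuous_map N N' id" "continuous_map N' N id"
    using assms unfolding is_negation_def pe_le_def by blast+
  have ts: "topspace N = topspace N'" using pe by (simp add: pointed_extension_def)
  show ?thesis unfolding topology_eq
  proof (intro allI iffI)
    fix S assume S: "openin N S"
    have "S \<subseteq> topspace N'" using openin_subset[OF S] ts by simp
    moreover have "{x \<in> topspace N'. id x \<in> S} = S" using calculation by auto
    moreover have "openin N' {x \<in> topspace N'. id x \<in> S}" using c(2) S unfolding continuous_map_def by blast
    ultimately show "openin N' S" by simp
  next
    fix S assume S: "openin N' S"
    have "S \<subseteq> topspace N" using openin_subset[OF S] ts by simp
    moreover have "{x \<in> topspace N. id x \<in> S} = S" using calculation by auto
    moreover have "openin N {x \<in> topspace N. id x \<in> S}" using c(1) S unfolding continuous_map_def by blast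
    ultimately show "openin N S" by simp
  qed
qed

context
  fixes Xb :: "'a topology" and L R :: "'a set"
  assumes cpt: "compact_space Xb" and hd: "Hausdorff_space Xb"
    and cL: "closedin Xb L" and cR: "closedin Xb R" and dj: "disjnt L R"
begin

lemma dj': "disjnt R L" using dj by (simp add: disjnt_sym)

lemma pe_plus_eq: "pe_plus (subtopology Xb (topspace Xb - (L \<union> R))) = collapse_quot Xb {} (L \<union> R)"
  unfolding topology_eq
proof
  fix U :: "'a option set"
  let ?X0 = "topspace Xb - (L \<union> R)"
  have ts: "topspace (subtopology Xb ?X0) = ?X0" by (simp add: topspace_subtopology Int_absorb1 Diff_subset)
  have "U \<subseteq> pt_carrier (subtopology Xb ?X0) \<longleftrightarrow> U \<subseteq> insert None (Some ` (topspace Xb - (L \<union> R) - {}))"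
    unfolding pt_carrier_def ts by simp
  moreover have "U \<subseteq> insert None (Some ` ?X0) \<Longrightarrow> {x. Some x \<in> U} = {x \<in> topspace Xb - (L \<union> R). qm {} x \<in> U}"
    by (auto simp: qm_def)
  ultimately show "openin (pe_plus (subtopology Xb ?X0)) U \<longleftrightarrow> openin (collapse_quot Xb {} (L \<union> R)) U"
    unfolding openin_pe_plus openin_cq by auto
qed

lemma kp: "k_space (pe_plus (subtopology Xb (topspace Xb - (L \<union> R))))"
proof -
  have "k_space (collapse_quot Xb {} (L \<union> R))"
    using k_cq[OF cpt hd closedin_empty closedin_Un[OF cL cR]] by (simp add: disjnt_def)
  then show ?thesis by (simp add: pe_plus_eq)
qed

lemma hausXX: "Hausdorff_space (subtopology Xb (topspace Xb - (L \<union> R)))"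
  using hd by (rule Hausdorff_space_subtopology)

lemma max_cq:
  assumes pe: "pointed_extension (subtopology Xb (topspace Xb - (L \<union> R))) N"
    and pd: "pe_disjoint (subtopology Xb (topspace Xb - (L \<union> R))) (collapse_quot Xb L R) N"
  shows "continuous_map N (collapse_quot Xb R L) id"
proof -
  let ?XX = "subtopology Xb (topspace Xb - (L \<union> R))"
  let ?X0 = "topspace Xb - (L \<union> R)"
  let ?T = "collapse_quot Xb L R"
  let ?T' = "collapse_quot Xb R L"
  have tsXX: "topspace ?XX = ?X0" by (simp add: topspace_subtopology Int_absorb1 Diff_subset)
  have tsN: "topspace N = insert None (Some ` ?X0)"
    using pe unfolding pointed_extension_def pt_carrier_def tsXX by simp
  have tsT': "topspace ?T' = insert None (Some ` ?X0)"
    by (auto simp: topspace_cq)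
  have hN: "Hausdorff_space N" and kN: "k_space N" using pe by (simp_all add: pointed_extension_def)
  have oL: "openin Xb (topspace Xb - L)" using cL by blast
  show ?thesis
    unfolding continuous_map_closedin
  proof (intro conjI allI impI)
    show "id \<in> topspace N \<rightarrow> topspace ?T'" using tsN tsT' by simp
    fix C assume C: "closedin ?T' C"
    have Csub: "C \<subseteq> insert None (Some ` ?X0)" using closedin_subset[OF C] tsT' by simp
    have eqC: "{x \<in> topspace N. id x \<in> C} = C" using Csub tsN by auto
    define W where "W = topspace ?T' - C"
    have oW: "openin ?T' W" using C unfolding W_def by blast
    define P where "P = {x \<in> topspace Xb - L. qm R x \<in> W}"
    have "openin (subtopology Xb (topspace Xb - L)) P" using oW unfolding openin_cq P_def by blast
    then have oP: "openin Xb P" using openin_trans_full oL by blast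
    have "closedin N C"
    proof (cases "None \<in> C")
      case True
      have e: "topspace N - C = Some ` (P - R)"
      proof (rule set_eqI, rule iffI)
        fix y assume y: "y \<in> topspace N - C"
        then obtain x where "y = Some x" "x \<in> ?X0" using True tsN by auto
        then show "y \<in> Some ` (P - R)" using y tsT' by (auto simp: P_def W_def qm_def)
      next
        fix y assume "y \<in> Some ` (P - R)"
        then obtain x where "y = Some x" "x \<in> P" "x \<notin> R" by auto
        then show "y \<in> topspace N - C" using tsN tsT' by (auto simp: P_def W_def qm_def)
      qed
      have "openin Xb (P - R)" using oP cR by (simp add: openin_diff)
      moreover have "P - R \<subseteq> ?X0" by (auto simp: P_def)
      ultimately have "openin ?XX (P - R)" by (simp add: openin_open_subtopology[OF oX0[OF cpt hd cL cR dj]])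
      then have "openin N (topspace N - C)" unfolding e by (rule pe_open_Some[OF pe])
      then show ?thesis using Csub tsN by (simp add: closedin_def)
    next
      case False
      define Q where "Q = topspace Xb - P"
      have RP: "R \<subseteq> P"
      proof
        fix x assume "x \<in> R"
        moreover have "R \<subseteq> topspace Xb" using cR closedin_subset by blast
        ultimately show "x \<in> P" using dj False tsT' by (auto simp: P_def W_def qm_def disjnt_def)
      qed
      have "closedin Xb Q" unfolding Q_def using oP by blast
      then have "compactin Xb Q" using cpt closedin_compact_space by blast
      moreover have "Q \<subseteq> topspace Xb - R" using RP by (auto simp: Q_def)
      ultimately have "compactin (subtopology Xb (topspace Xb - R)) Q" by (simp add: compactin_subtopology)
      then have c1: "compactin ?T (qm L ` Q)" using cont_qm[OF cpt hd cL cR dj] by (rule image_compactin)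
      have "None \<in> topspace ?T" by (simp add: topspace_cq)
      then have "compactin ?T {None}" by simp
      then have cKc: "compactin ?T (insert None (qm L ` Q))" using c1 by (metis compactin_Un insert_is_Un)
      have eKc: "insert None (qm L ` Q) = insert None C"
      proof (rule set_eqI, rule iffI)
        fix y assume "y \<in> insert None (qm L ` Q)"
        then show "y \<in> insert None C"
        proof
          assume "y \<in> qm L ` Q"
          then obtain x where x: "x \<in> Q" "y = qm L x" by blast
          show ?thesis
          proof (cases "x \<in> L")
            case True then show ?thesis using x by (simp add: qm_def)
          next
            case False
            then have "x \<in> ?X0" using x RP by (auto simp: Q_def)
            then show ?thesis using x False tsT' by (auto simp: Q_def P_def W_def qm_def)
          qed
        qed simp
      next
        fix y assume y: "y \<in> insert None C"
        show "y \<in> insert None (qm L ` Q)"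
        proof (cases "y = None")
          case False
          then obtain x where x: "y = Some x" "x \<in> ?X0" "Some x \<in> C" using y Csub by auto
          then have "x \<in> Q" by (auto simp: Q_def P_def W_def qm_def)
          moreover have "qm L x = Some x" using x by (simp add: qm_def)
          ultimately show ?thesis using x by (metis image_eqI insertI2)
        qed simp
      qed
      have cKC: "compactin ?T (insert None C)" using cKc eKc by simp
      show ?thesis
        using kN unfolding k_space
      proof (elim allE impE)
        show "C \<subseteq> topspace N \<and> (\<forall>K. compactin N K \<longrightarrow> closedin (subtopology N K) (K \<inter> C))"
        proof (intro conjI allI impI)
          show "C \<subseteq> topspace N" using Csub tsN by simp
          fix K assume K: "compactin N K"
          define Dg where "Dg = {(p, p) | p. p \<in> pt_carrier ?XX}"
          define S where "S = subtopology (prod_topology ?T N) Dg"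
          define D where "D = (insert None C \<times> K) \<inter> Dg"
          have "closedin (prod_topology ?T N) Dg"
            unfolding Dg_def
            by (rule diag_closed[OF pe_cq[OF cpt hd cL cR dj] pe lc_X0[OF cpt hd cL cR dj] hausXX])
          moreover have "compactin (prod_topology ?T N) (insert None C \<times> K)"
            using cKC K by (simp add: compactin_Times)
          ultimately have "compactin (prod_topology ?T N) D" unfolding D_def
            by (simp add: compact_Int_closedin)
          then have cD: "compactin S D" unfolding S_def by (simp add: compactin_subtopology D_def)
          have "homeomorphic_map (pe_plus ?XX) (kification S) (\<lambda>p. (p, p))"
            using pd unfolding pe_disjoint_def pe_fibre_product_def S_def Dg_def by simp
          moreover have "openin (pe_plus ?XX) {None}" by (simp add: openin_pe_plus pt_carrier_def)
          ultimately have "openin (kification S) ((\<lambda>p. (p, p)) ` {None})"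
            using homeomorphic_map_openness by (metis openin_subset)
          then have "openin (kification S) {(None, None)}" by simp
          then have oDn: "openin (subtopology S D) (D \<inter> {(None, None)})"
            using cD unfolding openin_kification by blast
          have tsD: "topspace (subtopology S D) = D"
            using compactin_subset_topspace[OF cD] by (simp add: topspace_subtopology Int_absorb1)
          have "closedin (subtopology S D) (D - {(None, None)})"
            unfolding closedin_def tsD using oDn by (simp add: Diff_Diff_Int)
          moreover have "compact_space (subtopology S D)" using cD by (rule compact_space_subtopology)
          ultimately have "compactin (subtopology S D) (D - {(None, None)})"
            using closedin_compact_space by blast
          then have "compactin (prod_topology ?T N) (D - {(None, None)})"
            unfolding S_def by (simp add: compactin_subtopology)
          then have "compactin N (snd ` (D - {(None, None)}))"
            using continuous_map_snd by (rule image_compactin)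
          moreover have "snd ` (D - {(None, None)}) = K \<inter> C"
          proof (rule set_eqI, rule iffI)
            fix y assume "y \<in> snd ` (D - {(None, None)})"
            then show "y \<in> K \<inter> C" by (auto simp: D_def Dg_def)
          next
            fix y assume y: "y \<in> K \<inter> C"
            have "y \<in> pt_carrier ?XX" using y Csub unfolding pt_carrier_def tsXX by auto
            moreover have "y \<noteq> None" using y False by (metis IntD2)
            ultimately have "(y, y) \<in> D - {(None, None)}" using y by (auto simp: D_def Dg_def)
            then show "y \<in> snd ` (D - {(None, None)})" by (metis image_eqI snd_conv)
          qed
          ultimately have "closedin N (K \<inter> C)" using hN compactin_imp_closedin by metis
          then show "closedin (subtopology N K) (K \<inter> C)"
            unfolding closedin_subtopology by blast
        qed
      qed
    qed
    then show "closedin N {x \<in> topspace N. id x \<in> C}" using eqC by simp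
  qed
qed


lemma negLR: "is_negation (subtopology Xb (topspace Xb - (L \<union> R))) (collapse_quot Xb L R) (collapse_quot Xb R L)"
proof -
  let ?XX = "subtopology Xb (topspace Xb - (L \<union> R))"
  have e: "R \<union> L = L \<union> R" by blast
  have pe1: "pointed_extension ?XX (collapse_quot Xb L R)" by (rule pe_cq[OF cpt hd cL cR dj])
  have pe2: "pointed_extension ?XX (collapse_quot Xb R L)" using pe_cq[OF cpt hd cR cL dj'] unfolding e .
  have "\<exists>A B. openin Xb A \<and> openin Xb B \<and> L \<subseteq> A \<and> R \<subseteq> B \<and> disjnt A B"
    using normalXb[OF cpt hd cL cR dj] cL cR dj unfolding normal_space_def by blast
  then obtain A B where AB: "openin Xb A" "openin Xb B" "L \<subseteq> A" "R \<subseteq> B" "disjnt A B"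
    by blast
  have oU: "openin (collapse_quot Xb L R) (insert None (Some ` (A - R - L)))"
    using cq_open_nb[OF cpt hd cL cR dj AB(1,3)] .
  have oU': "openin (collapse_quot Xb R L) (insert None (Some ` (B - L - R)))"
    using cq_open_nb[OF cpt hd cR cL dj' AB(2,4)] .
  have UU: "insert None (Some ` (A - R - L)) \<inter> insert None (Some ` (B - L - R)) = {None}"
    using AB(5) by (auto simp: disjnt_def)
  have pd: "pe_disjoint ?XX (collapse_quot Xb L R) (collapse_quot Xb R L)"
    by (rule disj_generic[OF pe1 pe2 kp oU oU' _ _ UU]) simp_all
  show ?thesis
    unfolding is_negation_def pe_le_def using pe2 pd max_cq by blast
qed

end


theorem mainTheorem13:
  fixes Xb :: "'a topology" and L R :: "'a set"
  assumes "compact_space Xb" and "Hausdorff_space Xb"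
    and "closedin Xb L" and "closedin Xb R" and "disjnt L R"
  defines "X \<equiv> subtopology Xb (topspace Xb - (L \<union> R))"
  shows "well_pointed X (collapse_quot Xb L R) \<and> well_pointed X (collapse_quot Xb R L) \<and>
         is_negation X (collapse_quot Xb L R) (collapse_quot Xb R L) \<and>
         is_negation X (collapse_quot Xb R L) (collapse_quot Xb L R)"
proof -
  have e: "R \<union> L = L \<union> R" by blast
  have dj': "disjnt R L" using assms(5) by (simp add: disjnt_sym)
  have n1: "is_negation X (collapse_quot Xb L R) (collapse_quot Xb R L)"
    unfolding X_def by (rule negLR[OF assms(1-5)])
  have n2: "is_negation X (collapse_quot Xb R L) (collapse_quot Xb L R)"
    unfolding X_def using negLR[OF assms(1,2,4,3) dj'] unfolding e .
  have p1: "pe_neg X (collapse_quot Xb L R) = collapse_quot Xb R L"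
    unfolding pe_neg_def using n1 pe_unique by blast
  have p2: "pe_neg X (collapse_quot Xb R L) = collapse_quot Xb L R"
    unfolding pe_neg_def using n2 pe_unique by blast
  have q1: "pointed_extension X (collapse_quot Xb L R)" using n2 by (simp add: is_negation_def)
  have q2: "pointed_extension X (collapse_quot Xb R L)" using n1 by (simp add: is_negation_def)
  have "well_pointed X (collapse_quot Xb L R)"
    unfolding well_pointed_def p1 p2 using q1 n1 n2 by auto
  moreover have "well_pointed X (collapse_quot Xb R L)"
    unfolding well_pointed_def p1 p2 using q2 n1 n2 by auto
  ultimately show ?thesis using n1 n2 by blast
qed

end
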